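(* Let $\Psi$ be a bialgebra endomorphism of ${\cal H}_R$. Then there exists a unique family $(P_t)_{t\in CT}$ of primitive elements of ${\cal H}_R$ such that $\Psi=\Phi_{(P_t)}$.
   Context: ${\cal H}_R$ is the commutative polynomial algebra over $\mathbb{Q}$ on the set $CT$ of isomorphism classes of rooted trees (finite connected simply connected graphs with a root, edges oriented away from the root; weight = number of vertices); monomials are forests. It is a bialgebra with coproduct the algebra morphism $\Delta(t)=1\otimes t+t\otimes1+\sum_CP^C(t)\otimes R^C(t)$, the sum over admissible cuts $C$ of $t$ (nonempty sets of edges meeting each root-to-vertex path at most once; after removing them, $R^C(t)$ is the component containing the root and $P^C(t)$ the product of the others), and counit $\varepsilon(1)=1$, $\varepsilon(t)=0$. Primitive: $\Delta(x)=x\otimes1+1\otimes x$. $l_1$ is the one-vertex tree. For forests $M,N$: $M\top N=0$ if $N=1$, else $\frac{1}{weight(N)}\sum_vN_v$, $v$ over vertices of $N$, $N_v$ obtained from $N$ by attaching every tree of $M$ to $v$; bilinear extension. For a family $(P_t)_{t\in CT}$ of primitive elements, $\Phi_{(P_t)}$ is the algebra endomorphism of ${\cal H}_R$ defined by induction on the weight of trees by $\Phi_{(P_t)}(l_1)=P_{l_1}$ and, for $T\in CT$, $\Phi_{(P_t)}(T)=\sum_{C}\Phi_{(P_t)}(P^C(T))\top P_{R^C(T)}+P_T$, the sum over admissible cuts $C$ of $T$ (it is a bialgebra endomorphism). *)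

theory Defs
  imports Complex_Main "HOL-Library.Multiset" "HOL-Library.Poly_Mapping" "HOL-Library.Product_Plus"
begin

text \<open>An (isomorphism class of a) rooted tree is a root together with the
multiset of the subtrees hanging from its children.  A forest is a multiset of
trees; the empty forest is the unit monomial 1.\<close>

datatype tree = Node "tree multiset"

type_synonym forest = "tree multiset"

definition l1 :: tree where "l1 = Node {#}"

primrec weight :: "tree \<Rightarrow> nat" where
  "weight (Node M) = Suc (sum_mset (image_mset weight M))"

definition fweight :: "forest \<Rightarrow> nat" where
  "fweight F = sum_mset (image_mset weight F)"

text \<open>H_R = commutative polynomial algebra over Q on the trees: finitely supported
rational coefficient functions on monomials (= forests), with convolution product.
H_R \<otimes> H_R is realised as finitely supported functions on pairs of forests,
with the componentwise product (F\<otimes>G)(F'\<otimes>G') = FF'\<otimes>GG'.\<close>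

type_synonym H = "forest \<Rightarrow>\<^sub>0 rat"
type_synonym H2 = "(forest \<times> forest) \<Rightarrow>\<^sub>0 rat"

definition mono :: "forest \<Rightarrow> H" where "mono F = Poly_Mapping.single F 1"

definition treeH :: "tree \<Rightarrow> H" where "treeH t = mono {#t#}"

definition scal :: "rat \<Rightarrow> ('a::monoid_add \<Rightarrow>\<^sub>0 rat) \<Rightarrow> ('a \<Rightarrow>\<^sub>0 rat)" where
  "scal c x = Poly_Mapping.single 0 c * x"

definition lext :: "('a \<Rightarrow> ('b::monoid_add \<Rightarrow>\<^sub>0 rat)) \<Rightarrow> ('a \<Rightarrow>\<^sub>0 rat) \<Rightarrow> ('b \<Rightarrow>\<^sub>0 rat)" where
  "lext f x = (\<Sum>F\<in>Poly_Mapping.keys x. scal (Poly_Mapping.lookup x F) (f F))"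

definition tens :: "H \<Rightarrow> H \<Rightarrow> H2" where
  "tens a b = (\<Sum>F\<in>Poly_Mapping.keys a. \<Sum>G\<in>Poly_Mapping.keys b. Poly_Mapping.single (F, G) (Poly_Mapping.lookup a F * Poly_Mapping.lookup b G))"

definition tmap :: "(H \<Rightarrow> H) \<Rightarrow> (H \<Rightarrow> H) \<Rightarrow> H2 \<Rightarrow> H2" where
  "tmap f g z = lext (\<lambda>(F, G). tens (f (mono F)) (g (mono G))) z"

text \<open>For a tree t, cuts t is the multiset (with multiplicity, i.e. indexed by
cuts) of pairs (P^C(t), R^C(t)) for all admissible cuts C of t, INCLUDING the
empty cut (which gives (1, t)).  It is computed recursively: for each child c of
the root one either cuts the edge to c (c goes entirely into the pruned part), or
keeps that edge and chooses an (arbitrary, possibly empty) admissible cut of c.\<close>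

definition child_opts :: "tree \<Rightarrow> (forest \<times> tree) multiset \<Rightarrow> (forest \<times> forest) multiset" where
  "child_opts c cs = add_mset ({#c#}, {#}) (image_mset (\<lambda>(p, r). (p, {#r#})) cs)"

definition pairprod :: "(forest \<times> forest) multiset \<Rightarrow> (forest \<times> forest) multiset \<Rightarrow> (forest \<times> forest) multiset" where
  "pairprod A B = sum_mset (image_mset (\<lambda>a. image_mset (\<lambda>b. (fst a + fst b, snd a + snd b)) B) A)"

definition combine :: "(forest \<times> forest) multiset multiset \<Rightarrow> (forest \<times> forest) multiset" where
  "combine Ms = fold_mset pairprod {#({#}, {#})#} Ms"

primrec cuts_aux :: "tree \<Rightarrow> tree \<times> (forest \<times> tree) multiset" where
  "cuts_aux (Node M) = (Node M,
     image_mset (\<lambda>(p, rs). (p, Node rs))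
       (combine (image_mset (\<lambda>(c, cs). child_opts c cs) (image_mset cuts_aux M))))"

definition cuts :: "tree \<Rightarrow> (forest \<times> tree) multiset" where
  "cuts t = snd (cuts_aux t)"

text \<open>nonempty admissible cuts: exactly those whose pruned part is not 1\<close>
definition ncuts :: "tree \<Rightarrow> (forest \<times> tree) multiset" where
  "ncuts t = filter_mset (\<lambda>(p, r). p \<noteq> {#}) (cuts t)"

definition DeltaT :: "tree \<Rightarrow> H2" where
  "DeltaT t = Poly_Mapping.single ({#}, {#t#}) 1 + Poly_Mapping.single ({#t#}, {#}) 1
     + sum_mset (image_mset (\<lambda>(p, r). Poly_Mapping.single (p, {#r#}) 1) (ncuts t))"

definition Delta :: "H \<Rightarrow> H2" where
  "Delta x = lext (\<lambda>F. prod_mset (image_mset DeltaT F)) x"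

definition eps :: "H \<Rightarrow> rat" where
  "eps x = Poly_Mapping.lookup x {#}"

definition primitive :: "H \<Rightarrow> bool" where
  "primitive x \<longleftrightarrow> Delta x = tens x 1 + tens 1 x"

definition bialg_endo :: "(H \<Rightarrow> H) \<Rightarrow> bool" where
  "bialg_endo \<Psi> \<longleftrightarrow>
     (\<forall>x y. \<Psi> (x + y) = \<Psi> x + \<Psi> y) \<and> (\<forall>c x. \<Psi> (scal c x) = scal c (\<Psi> x)) \<and>
     \<Psi> 1 = 1 \<and> (\<forall>x y. \<Psi> (x * y) = \<Psi> x * \<Psi> y) \<and>
     (\<forall>x. Delta (\<Psi> x) = tmap \<Psi> \<Psi> (Delta x)) \<and>
     (\<forall>x. eps (\<Psi> x) = eps x)"

text \<open>graft M t: multiset (indexed by the vertices v of t) of the trees obtained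
from t by attaching every tree of M to v.\<close>

primrec graft_aux :: "forest \<Rightarrow> tree \<Rightarrow> tree \<times> tree multiset" where
  "graft_aux M (Node C) = (Node C,
     add_mset (Node (C + M))
       (sum_mset (image_mset (\<lambda>(c, gs). image_mset (\<lambda>c'. Node (C - {#c#} + {#c'#})) gs)
          (image_mset (graft_aux M) C))))"

definition graft :: "forest \<Rightarrow> tree \<Rightarrow> tree multiset" where
  "graft M t = snd (graft_aux M t)"

definition graftF :: "forest \<Rightarrow> forest \<Rightarrow> forest multiset" where
  "graftF M N = sum_mset (image_mset (\<lambda>t. image_mset (\<lambda>t'. N - {#t#} + {#t'#}) (graft M t)) N)"

definition topF :: "forest \<Rightarrow> forest \<Rightarrow> H" where
  "topF M N = (if N = {#} then 0
     else scal (1 / of_nat (fweight N)) (sum_mset (image_mset mono (graftF M N))))"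

definition top :: "H \<Rightarrow> H \<Rightarrow> H" where
  "top x y = (\<Sum>M\<in>Poly_Mapping.keys x. \<Sum>N\<in>Poly_Mapping.keys y. scal (Poly_Mapping.lookup x M * Poly_Mapping.lookup y N) (topF M N))"

text \<open>Phi on trees, by well-founded recursion on the weight (all trees of the
pruned parts P^C(T) have smaller weight than T, so the recursion is genuine).\<close>

definition phiT :: "(tree \<Rightarrow> H) \<Rightarrow> tree \<Rightarrow> H" where
  "phiT P = wfrec (measure weight)
     (\<lambda>rec T. sum_mset (image_mset (\<lambda>(p, r). top (prod_mset (image_mset rec p)) (P r)) (ncuts T))
              + P T)"

definition Phi :: "(tree \<Rightarrow> H) \<Rightarrow> H \<Rightarrow> H" where
  "Phi P = lext (\<lambda>F. prod_mset (image_mset (phiT P) F))"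

end

theory Submission
  imports Defs
begin


lemma lookup_pmap: "Poly_Mapping.lookup (Poly_Mapping.map g f) k = (g (Poly_Mapping.lookup f k) when Poly_Mapping.lookup f k \<noteq> 0)"
  by transfer simp

lemma lookup_scal [simp]: "Poly_Mapping.lookup (scal c x) k = c * Poly_Mapping.lookup x k"
  unfolding scal_def by (simp flip: mult_map_scale_conv_mult add: lookup_pmap when_def)

lemma scal_0 [simp]: "scal 0 x = 0"
  by (rule poly_mapping_eqI) simp
lemma scal_zero [simp]: "scal c 0 = 0"
  by (rule poly_mapping_eqI) simp
lemma scal_1 [simp]: "scal 1 x = x"
  by (rule poly_mapping_eqI) simp
lemma scal_add_right: "scal c (x + y) = scal c x + scal c y"
  by (rule poly_mapping_eqI) (simp add: lookup_add algebra_simps)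
lemma scal_add_left: "scal (c + d) x = scal c x + scal d x"
  by (rule poly_mapping_eqI) (simp add: lookup_add algebra_simps)
lemma scal_diff_right: "scal c (x - y) = scal c x - scal c y"
  by (rule poly_mapping_eqI) (simp add: lookup_minus algebra_simps)
lemma scal_scal [simp]: "scal c (scal d x) = scal (c * d) x"
  by (rule poly_mapping_eqI) simp
lemma scal_single [simp]: "scal c (Poly_Mapping.single k d) = Poly_Mapping.single k (c * d)"
  by (rule poly_mapping_eqI) (simp add: lookup_single when_def)
lemma scal_sum: "scal c (sum f I) = (\<Sum>i\<in>I. scal c (f i))"
  by (rule poly_mapping_eqI) (simp add: lookup_sum sum_distrib_left)
lemma scal_sum_mset: "scal c (\<Sum>i\<in>#X. f i) = (\<Sum>i\<in>#X. scal c (f i))"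
  by (induction X) (simp_all add: scal_add_right)
lemma scal_mult_left: "scal c x * y = scal c (x * y)"
  unfolding scal_def by (simp add: mult.assoc)
lemma scal_mult_right: "x * scal c (y :: ('a::comm_monoid_add \<Rightarrow>\<^sub>0 rat)) = scal c (x * y)"
  unfolding scal_def by (simp add: mult.left_commute)

lemma lext_superset:
  assumes "finite S" "Poly_Mapping.keys x \<subseteq> S"
  shows "lext f x = (\<Sum>F\<in>S. scal (Poly_Mapping.lookup x F) (f F))"
  unfolding lext_def using assms
  by (intro sum.mono_neutral_left) (auto simp: in_keys_iff)

lemma lext_add: "lext f (x + y) = lext f x + lext f y"
proof -
  have S: "finite (Poly_Mapping.keys x \<union> Poly_Mapping.keys y)" by simp
  have k: "Poly_Mapping.keys (x + y) \<subseteq> Poly_Mapping.keys x \<union> Poly_Mapping.keys y"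
    by (rule keys_add)
  show ?thesis
    by (simp add: lext_superset[OF S k] lext_superset[OF S, of x] lext_superset[OF S, of y]
        lookup_add scal_add_left sum.distrib)
qed

lemma lext_zero [simp]: "lext f 0 = 0"
  by (simp add: lext_def)

lemma lext_scal: "lext f (scal c x) = scal c (lext f x)"
proof -
  have k: "Poly_Mapping.keys (scal c x) \<subseteq> Poly_Mapping.keys x"
    by (auto simp: in_keys_iff)
  show ?thesis
    unfolding lext_superset[OF finite_keys k] by (simp add: lext_def scal_sum)
qed

lemma lext_single [simp]: "lext f (Poly_Mapping.single k c) = scal c (f k)"
  by (cases "c = 0") (simp_all add: lext_def)

lemma lext_sum: "lext f (sum g I) = (\<Sum>i\<in>I. lext f (g i))"
  by (induction I rule: infinite_finite_induct) (simp_all add: lext_add)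

lemma lext_sum_mset: "lext f (\<Sum>i\<in>#X. g i) = (\<Sum>i\<in>#X. lext f (g i))"
  by (induction X) (simp_all add: lext_add)

lemma lext_diff: "lext f (x - y) = lext f x - lext f y"
  using lext_add[of f "x - y" y] by (simp add: algebra_simps)

lemma lext_cong: "(\<And>F. F \<in> Poly_Mapping.keys x \<Longrightarrow> f F = g F) \<Longrightarrow> lext f x = lext g x"
  by (simp add: lext_def)

lemma lookup_lext: "Poly_Mapping.lookup (lext f x) k = (\<Sum>F\<in>Poly_Mapping.keys x. Poly_Mapping.lookup x F * Poly_Mapping.lookup (f F) k)"
  by (simp add: lext_def lookup_sum)

lemma lext_expand: "lext (\<lambda>F. Poly_Mapping.single F 1) x = x"
proof (rule poly_mapping_eqI)
  fix k
  show "Poly_Mapping.lookup (lext (\<lambda>F. Poly_Mapping.single F 1) x) k = Poly_Mapping.lookup x k"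
  proof -
    have "Poly_Mapping.lookup (lext (\<lambda>F. Poly_Mapping.single F 1) x) k =
      (\<Sum>F\<in>Poly_Mapping.keys x. if F = k then Poly_Mapping.lookup x F else 0)"
      unfolding lookup_lext by (intro sum.cong) (auto simp: lookup_single when_def)
    also have "\<dots> = Poly_Mapping.lookup x k" by (simp add: sum.delta' in_keys_iff)
    finally show ?thesis .
  qed
qed

lemma lext_zero_fun [simp]: "lext (\<lambda>F. 0) x = 0"
  by (simp add: lext_def)

lemma lext_plus_fun: "lext (\<lambda>F. f F + g F) x = lext f x + lext g x"
  by (simp add: lext_def scal_add_right sum.distrib)

lemma lext_scal_fun: "lext (\<lambda>F. scal c (f F)) x = scal c (lext f x)"
  by (simp add: lext_def scal_sum mult.commute)

lemma lext_sum_fun: "lext (\<lambda>F. \<Sum>i\<in>I. f i F) x = (\<Sum>i\<in>I. lext (f i) x)"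
  by (induction I rule: infinite_finite_induct) (simp_all add: lext_plus_fun)

lemma lext_sum_mset_fun: "lext (\<lambda>F. \<Sum>i\<in>#X. f i F) x = (\<Sum>i\<in>#X. lext (f i) x)"
  by (induction X) (simp_all add: lext_plus_fun)

definition linear_map :: "(('a::monoid_add \<Rightarrow>\<^sub>0 rat) \<Rightarrow> ('b::monoid_add \<Rightarrow>\<^sub>0 rat)) \<Rightarrow> bool" where
  "linear_map L \<longleftrightarrow> (\<forall>x y. L (x + y) = L x + L y) \<and> (\<forall>c x. L (scal c x) = scal c (L x))"

lemma linear_map_lext: "linear_map (lext f)"
  by (simp add: linear_map_def lext_add lext_scal)

lemma linear_map_sum: "linear_map L \<Longrightarrow> L (sum g I) = (\<Sum>i\<in>I. L (g i))"
  unfolding linear_map_def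
proof (induction I rule: infinite_finite_induct)
  case (infinite A)
  then show ?case using scal_0[of 0] by (metis scal_0 sum.infinite)
next
  case empty
  then show ?case by (metis scal_0 sum.empty)
next
  case (insert x F)
  then show ?case by simp
qed

lemma linear_map_is_lext:
  assumes "linear_map L"
  shows "L x = lext (\<lambda>F. L (Poly_Mapping.single F 1)) x"
proof -
  have "L x = L (lext (\<lambda>F. Poly_Mapping.single F 1) x)" by (simp add: lext_expand)
  also have "\<dots> = (\<Sum>F\<in>Poly_Mapping.keys x. L (scal (Poly_Mapping.lookup x F) (Poly_Mapping.single F 1)))"
    unfolding lext_def by (rule linear_map_sum[OF assms])
  also have "\<dots> = lext (\<lambda>F. L (Poly_Mapping.single F 1)) x"
    using assms unfolding linear_map_def lext_def
    by (metis (no_types, lifting) mult.right_neutral scal_single sum.cong)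
  finally show ?thesis .
qed

lemma lext_lext: "lext g (lext f x) = lext (\<lambda>F. lext g (f F)) x"
proof -
  have "lext g (lext f x) = (\<Sum>F\<in>Poly_Mapping.keys x. lext g (scal (Poly_Mapping.lookup x F) (f F)))"
    unfolding lext_def[of f] by (rule lext_sum)
  also have "\<dots> = lext (\<lambda>F. lext g (f F)) x"
    by (simp add: lext_scal lext_def[of "\<lambda>F. lext g (f F)"])
  finally show ?thesis .
qed

definition msum :: "'a multiset \<Rightarrow> ('a \<Rightarrow>\<^sub>0 rat)" where
  "msum X = (\<Sum>x\<in>#X. Poly_Mapping.single x 1)"

lemma msum_empty [simp]: "msum {#} = 0" by (simp add: msum_def)
lemma msum_add_mset [simp]: "msum (add_mset x X) = Poly_Mapping.single x 1 + msum X" by (simp add: msum_def)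
lemma msum_union [simp]: "msum (X + Y) = msum X + msum Y" by (simp add: msum_def)
lemma lookup_msum: "Poly_Mapping.lookup (msum X) k = of_nat (count X k)"
  by (induction X) (auto simp: lookup_add lookup_single when_def)
lemma msum_inj: "msum X = msum Y \<Longrightarrow> X = Y"
  by (metis lookup_msum multiset_eqI of_nat_eq_iff)
lemma lext_msum: "lext f (msum X) = (\<Sum>x\<in>#X. f x)"
  by (simp add: msum_def lext_sum_mset)
lemma msum_sum_mset: "msum (\<Sum>i\<in>#Xs. f i) = (\<Sum>i\<in>#Xs. msum (f i))"
  by (induction Xs) auto

lemma lookup_tens: "Poly_Mapping.lookup (tens a b) (F, G) = Poly_Mapping.lookup a F * Poly_Mapping.lookup b G"
proof -
  have "Poly_Mapping.lookup (tens a b) (F, G) = (\<Sum>F'\<in>Poly_Mapping.keys a. \<Sum>G'\<in>Poly_Mapping.keys b.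
      (if F' = F \<and> G' = G then Poly_Mapping.lookup a F' * Poly_Mapping.lookup b G' else 0))"
    by (simp add: tens_def lookup_sum lookup_single when_def)
  also have "\<dots> = (\<Sum>F'\<in>Poly_Mapping.keys a. if F' = F then (if G \<in> Poly_Mapping.keys b then
       Poly_Mapping.lookup a F' * Poly_Mapping.lookup b G else 0) else 0)"
    by (intro sum.cong refl) (auto simp: sum.delta' intro: sum.neutral)
  also have "\<dots> = Poly_Mapping.lookup a F * Poly_Mapping.lookup b G"
    by (auto simp: sum.delta' in_keys_iff)
  finally show ?thesis .
qed

lemma tens_eqI: "(\<And>F G. Poly_Mapping.lookup z (F, G) = Poly_Mapping.lookup a F * Poly_Mapping.lookup b G) \<Longrightarrow> tens a b = z"
  by (rule poly_mapping_eqI) (auto simp: lookup_tens)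

lemma tens_add_left: "tens (a + a') b = tens a b + tens a' b"
  by (rule poly_mapping_eqI) (auto simp: lookup_tens lookup_add algebra_simps)
lemma tens_add_right: "tens a (b + b') = tens a b + tens a b'"
  by (rule poly_mapping_eqI) (auto simp: lookup_tens lookup_add algebra_simps)
lemma tens_diff_left: "tens (a - a') b = tens a b - tens a' b"
  by (rule poly_mapping_eqI) (auto simp: lookup_tens lookup_minus algebra_simps)
lemma tens_diff_right: "tens a (b - b') = tens a b - tens a b'"
  by (rule poly_mapping_eqI) (auto simp: lookup_tens lookup_minus algebra_simps)
lemma tens_scal_left: "tens (scal c a) b = scal c (tens a b)"
  by (rule poly_mapping_eqI) (auto simp: lookup_tens algebra_simps)
lemma tens_scal_right: "tens a (scal c b) = scal c (tens a b)"
  by (rule poly_mapping_eqI) (auto simp: lookup_tens algebra_simps)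
lemma tens_zero_left [simp]: "tens 0 b = 0"
  by (rule poly_mapping_eqI) (auto simp: lookup_tens)
lemma tens_zero_right [simp]: "tens a 0 = 0"
  by (rule poly_mapping_eqI) (auto simp: lookup_tens)
lemma tens_single: "tens (Poly_Mapping.single F c) (Poly_Mapping.single G d) = Poly_Mapping.single (F, G) (c * d)"
  by (rule poly_mapping_eqI, rename_tac k, case_tac k, simp add: lookup_tens lookup_single when_def)
lemma tens_mono: "tens (mono F) (mono G) = Poly_Mapping.single (F, G) 1"
  by (simp add: mono_def tens_single)
lemma tens_sum_left: "tens (sum f I) b = (\<Sum>i\<in>I. tens (f i) b)"
  by (induction I rule: infinite_finite_induct) (simp_all add: tens_add_left)
lemma tens_sum_right: "tens a (sum f I) = (\<Sum>i\<in>I. tens a (f i))"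
  by (induction I rule: infinite_finite_induct) (simp_all add: tens_add_right)
lemma tens_sum_mset_left: "tens (\<Sum>i\<in>#X. f i) b = (\<Sum>i\<in>#X. tens (f i) b)"
  by (induction X) (simp_all add: tens_add_left)
lemma tens_sum_mset_right: "tens a (\<Sum>i\<in>#X. f i) = (\<Sum>i\<in>#X. tens a (f i))"
  by (induction X) (simp_all add: tens_add_right)

lemma tens_lext_left: "tens (lext f x) b = lext (\<lambda>F. tens (f F) b) x"
  by (simp add: lext_def tens_sum_left tens_scal_left)
lemma tens_lext_right: "tens a (lext f x) = lext (\<lambda>F. tens a (f F)) x"
  by (simp add: lext_def tens_sum_right tens_scal_right)

lemma lext_tens:
  "lext h (tens a b) = lext (\<lambda>F. lext (\<lambda>G. h (F, G)) b) a"
proof -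
  have "lext h (tens a b) = (\<Sum>F\<in>Poly_Mapping.keys a. \<Sum>G\<in>Poly_Mapping.keys b.
          scal (Poly_Mapping.lookup a F * Poly_Mapping.lookup b G) (h (F, G)))"
    by (simp add: tens_def lext_sum)
  also have "\<dots> = lext (\<lambda>F. lext (\<lambda>G. h (F, G)) b) a"
    by (simp add: lext_def scal_sum mult.commute)
  finally show ?thesis .
qed



section \<open>multiset products\<close>

lemma image_sum_mset: "image_mset f (\<Sum>x\<in>#X. g x) = (\<Sum>x\<in>#X. image_mset f (g x))"
  by (induction X) auto

lemma sum_mset_bind: "(\<Sum>y\<in>#(\<Sum>x\<in>#X. g x). f y) = (\<Sum>x\<in>#X. \<Sum>y\<in>#g x. f y)"
  by (induction X) auto

lemma image_mset_plus0 [simp]: "image_mset ((+) (0::'a::monoid_add)) B = B"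
  by (induction B) auto

definition mprod :: "'a::comm_monoid_add multiset \<Rightarrow> 'a multiset \<Rightarrow> 'a multiset" where
  "mprod A B = (\<Sum>a\<in>#A. image_mset (\<lambda>b. a + b) B)"

lemma mprod_empty_left [simp]: "mprod {#} B = {#}" by (simp add: mprod_def)
lemma mprod_empty_right [simp]: "mprod A {#} = {#}" by (simp add: mprod_def)
lemma mprod_add_mset_left: "mprod (add_mset a A) B = image_mset (\<lambda>b. a + b) B + mprod A B"
  by (simp add: mprod_def)
lemma mprod_union_left: "mprod (A + A') B = mprod A B + mprod A' B"
  by (simp add: mprod_def)
lemma mprod_add_mset_right: "mprod A (add_mset b B) = image_mset (\<lambda>a. a + b) A + mprod A B"
  by (induction A) (simp_all add: mprod_add_mset_left)
lemma mprod_union_right: "mprod A (B + B') = mprod A B + mprod A B'"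
  by (induction A) (simp_all add: mprod_add_mset_left)
lemma mprod_zero_left [simp]: "mprod {#0#} B = B"
  by (simp add: mprod_def)
lemma mprod_zero_right [simp]: "mprod A {#0#} = A"
  by (induction A) (simp_all add: mprod_add_mset_left)
lemma mprod_single_single [simp]: "mprod {#a#} {#b#} = {#a + b#}"
  by (simp add: mprod_def)

lemma mprod_sum_left: "mprod (\<Sum>i\<in>#X. f i) B = (\<Sum>i\<in>#X. mprod (f i) B)"
  by (induction X) (simp_all add: mprod_union_left)
lemma mprod_sum_right: "mprod A (\<Sum>i\<in>#X. f i) = (\<Sum>i\<in>#X. mprod A (f i))"
  by (induction X) (simp_all add: mprod_union_right)

lemma msum_mprod: "msum (mprod A B) = msum A * msum B"
proof (induction A)
  case empty then show ?case by simp
next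
  case (add a A)
  have "msum (image_mset (\<lambda>b. a + b) B) = Poly_Mapping.single a 1 * msum B"
    by (induction B) (simp_all add: distrib_left mult_single)
  then show ?case using add by (simp add: mprod_add_mset_left distrib_right)
qed

lemma mprod_comm: "mprod A (B :: 'a :: comm_monoid_add multiset) = mprod B A"
  by (rule msum_inj) (simp add: msum_mprod mult.commute)

lemma mprod_assoc: "mprod (mprod A B) C = mprod A (mprod B (C :: 'a :: comm_monoid_add multiset))"
  by (rule msum_inj) (simp add: msum_mprod mult.assoc)

lemma mprod_left_commute: "mprod A (mprod B C) = mprod B (mprod A (C :: 'a :: comm_monoid_add multiset))"
  by (metis mprod_assoc mprod_comm)

lemma image_mprod:
  assumes "\<And>a b. h (a + b) = h a + h b"
  shows "image_mset h (mprod A B) = mprod (image_mset h A) (image_mset h B)"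
  unfolding mprod_def by (simp add: image_sum_mset assms multiset.map_comp o_def) 

lemma mprod_image:
  "mprod (image_mset g1 A) (image_mset g2 B) = (\<Sum>a\<in>#A. image_mset (\<lambda>b. g1 a + g2 b) B)"
  unfolding mprod_def by (simp add: multiset.map_comp o_def)

lemma mprod_eq_bind: "mprod A B = (\<Sum>a\<in>#A. \<Sum>b\<in>#B. {#a + b#})"
  unfolding mprod_def by simp

lemma bind_mprod: "(\<Sum>x\<in>#mprod A B. f x) = (\<Sum>a\<in>#A. \<Sum>b\<in>#B. f (a + b))"
  unfolding mprod_def sum_mset_bind by (simp add: multiset.map_comp o_def)



lemma bind_mult:
  assumes "\<And>a b. a \<in># A \<Longrightarrow> b \<in># B \<Longrightarrow> f (a + b) = mprod (f a) (f b)"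
  shows "(\<Sum>x\<in>#mprod A B. f x) = mprod (\<Sum>a\<in>#A. f a) (\<Sum>b\<in>#B. f b)"
proof -
  have "(\<Sum>x\<in>#mprod A B. f x) = (\<Sum>a\<in>#A. \<Sum>b\<in>#B. mprod (f a) (f b))"
    unfolding bind_mprod using assms
    by (intro arg_cong[where f=sum_mset] image_mset_cong) auto
  also have "\<dots> = (\<Sum>a\<in>#A. mprod (f a) (\<Sum>b\<in>#B. f b))"
    by (simp only: mprod_sum_right)
  also have "\<dots> = mprod (\<Sum>a\<in>#A. f a) (\<Sum>b\<in>#B. f b)"
    by (simp only: mprod_sum_left)
  finally show ?thesis .
qed

lemma sum_single_id [simp]: "(\<Sum>b\<in>#B. {#b#}) = B"
  by (induction B) auto

lemma bind_deriv:
  assumes "\<And>a b. a \<in># A \<Longrightarrow> b \<in># B \<Longrightarrow> f (a + b) = mprod (f a) {#b#} + mprod {#a#} (f b)"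
  shows "(\<Sum>x\<in>#mprod A B. f x) = mprod (\<Sum>a\<in>#A. f a) B + mprod A (\<Sum>b\<in>#B. f b)"
proof -
  have "(\<Sum>x\<in>#mprod A B. f x) = (\<Sum>a\<in>#A. \<Sum>b\<in>#B. mprod (f a) {#b#} + mprod {#a#} (f b))"
    unfolding bind_mprod using assms
    by (intro arg_cong[where f=sum_mset] image_mset_cong) auto
  also have "\<dots> = (\<Sum>a\<in>#A. mprod (f a) (\<Sum>b\<in>#B. {#b#})) + (\<Sum>a\<in>#A. mprod {#a#} (\<Sum>b\<in>#B. f b))"
    by (simp only: sum_mset.distrib mprod_sum_right)
  also have "\<dots> = mprod (\<Sum>a\<in>#A. f a) B + mprod A (\<Sum>b\<in>#B. f b)"
    by (simp add: mprod_sum_left[symmetric])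
  finally show ?thesis .
qed

lemma in_mprodE:
  assumes "x \<in># mprod A B"
  obtains a b where "a \<in># A" "b \<in># B" "x = a + b"
  using assms unfolding mprod_def by auto

lemma filter_mprod:
  assumes "\<And>a b. P (a + b) \<longleftrightarrow> P a \<and> P b"
  shows "filter_mset P (mprod A B) = mprod (filter_mset P A) (filter_mset P B)"
proof (induction A)
  case empty then show ?case by simp
next
  case (add a A)
  show ?case
    using add by (simp add: mprod_add_mset_left filter_mset_image_mset assms)
qed

section \<open>trees, cuts\<close>

definition dterms :: "tree \<Rightarrow> (forest \<times> forest) multiset" where
  "dterms t = child_opts t (cuts t)"

definition D :: "forest \<Rightarrow> (forest \<times> forest) multiset" where
  "D F = combine (image_mset dterms F)"

lemma pairprod_mprod: "pairprod = mprod"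
  by (intro ext) (simp add: pairprod_def mprod_def plus_prod_def)

lemma cfc_mprod: "comp_fun_commute (mprod :: (forest \<times> forest) multiset \<Rightarrow> _)"
  by unfold_locales (auto simp: fun_eq_iff mprod_left_commute)

lemma D_empty [simp]: "D {#} = {#0#}"
  by (simp add: D_def combine_def zero_prod_def)

lemma D_add_mset: "D (add_mset t F) = mprod (dterms t) (D F)"
  by (simp add: D_def combine_def pairprod_mprod comp_fun_commute.fold_mset_add_mset[OF cfc_mprod])

lemma D_union: "D (F + G) = mprod (D F) (D G)"
  by (induction F) (simp_all add: D_add_mset mprod_assoc)

lemma D_single [simp]: "D {#t#} = dterms t"
  by (simp add: D_add_mset)

lemma fst_cuts_aux [simp]: "fst (cuts_aux t) = t"
  by (cases t) simp

lemma cuts_Node: "cuts (Node M) = image_mset (\<lambda>(p, rs). (p, Node rs)) (D M)"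
proof -
  have "image_mset (\<lambda>(c, cs). child_opts c cs) (image_mset cuts_aux M) = image_mset dterms M"
    by (simp add: multiset.map_comp o_def dterms_def[abs_def] cuts_def[symmetric] case_prod_beta)
  then show ?thesis by (simp add: cuts_def D_def)
qed

lemma dterms_eq: "dterms t = add_mset ({#t#}, {#}) (image_mset (\<lambda>(p, r). (p, {#r#})) (cuts t))"
  by (simp add: dterms_def child_opts_def)

lemma fweight_empty [simp]: "fweight {#} = 0" by (simp add: fweight_def)
lemma fweight_add_mset [simp]: "fweight (add_mset t F) = weight t + fweight F" by (simp add: fweight_def)
lemma fweight_union [simp]: "fweight (F + G) = fweight F + fweight G" by (simp add: fweight_def)
lemma weight_Node: "weight (Node M) = Suc (fweight M)" by (simp add: fweight_def)
lemma weight_pos: "0 < weight t" by (cases t) simp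
lemma fweight_zero_iff [simp]: "fweight F = 0 \<longleftrightarrow> F = {#}"
  by (induction F) (auto simp: weight_pos dest: gr0_implies_Suc)
lemma weight_in_fweight: "t \<in># F \<Longrightarrow> weight t \<le> fweight F"
  by (induction F) auto

lemma D_weight_gen:
  assumes "\<And>t p r. t \<in># F \<Longrightarrow> (p, r) \<in># cuts t \<Longrightarrow> fweight p + weight r = weight t"
    and "x \<in># D F"
  shows "fweight (fst x) + fweight (snd x) = fweight F"
  using assms
proof (induction F arbitrary: x)
  case empty then show ?case by (simp add: zero_prod_def)
next
  case (add t F)
  from add.prems(2) obtain a b where ab: "a \<in># dterms t" "b \<in># D F" "x = a + b"
    by (auto simp: D_add_mset elim: in_mprodE)
  have "fweight (fst b) + fweight (snd b) = fweight F"
    using add.IH[of b] add.prems(1) ab(2) by auto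
  moreover have "fweight (fst a) + fweight (snd a) = weight t"
    using ab(1) add.prems(1) by (auto simp: dterms_eq)
  ultimately show ?case using ab(3) by (simp add: plus_prod_def)
qed

lemma cuts_weight: "(p, r) \<in># cuts t \<Longrightarrow> fweight p + weight r = weight t"
proof (induction t arbitrary: p r)
  case (Node M)
  from Node.prems obtain rs where "(p, rs) \<in># D M" "r = Node rs"
    by (auto simp: cuts_Node)
  moreover have "fweight p + fweight rs = fweight M"
    using D_weight_gen[of M "(p, rs)"] Node.IH calculation(1) by auto
  ultimately show ?case by (simp add: weight_Node del: weight.simps)
qed

lemma D_weight: "x \<in># D F \<Longrightarrow> fweight (fst x) + fweight (snd x) = fweight F"
  using D_weight_gen cuts_weight by blast

lemma D_weight': "(a, b) \<in># D F \<Longrightarrow> fweight a + fweight b = fweight F"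
  using D_weight by fastforce

lemma ncuts_weight:
  assumes "(p, r) \<in># ncuts t"
  shows "weight r < weight t" "\<And>s. s \<in># p \<Longrightarrow> weight s < weight t"
proof -
  have pr: "(p, r) \<in># cuts t" "p \<noteq> {#}" using assms by (auto simp: ncuts_def)
  have w: "fweight p + weight r = weight t" by (rule cuts_weight[OF pr(1)])
  have "0 < fweight p" using pr(2) by (metis fweight_zero_iff gr0I)
  then show "weight r < weight t" using w by simp
  fix s assume "s \<in># p"
  then have "weight s \<le> fweight p" by (rule weight_in_fweight)
  then show "weight s < weight t" using w weight_pos[of r] by simp
qed

lemma D_filter_gen:
  assumes "\<And>t. t \<in># F \<Longrightarrow> filter_mset (\<lambda>x. fst x = {#}) (cuts t) = {#({#}, t)#}"
  shows "filter_mset (\<lambda>x. fst x = {#}) (D F) = {#({#}, F)#}"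
  using assms
proof (induction F)
  case empty then show ?case by (simp add: zero_prod_def)
next
  case (add t F)
  have f: "filter_mset (\<lambda>x. fst x = {#}) (dterms t) = {#({#}, {#t#})#}"
  proof -
    have "filter_mset (\<lambda>x. fst x = {#}) (dterms t) =
      image_mset (\<lambda>(p, r). (p, {#r#})) (filter_mset (\<lambda>x. fst x = {#}) (cuts t))"
      by (simp add: dterms_eq filter_mset_image_mset case_prod_beta)
    then show ?thesis using add.prems by simp
  qed
  show ?case
    using add by (simp add: D_add_mset filter_mprod plus_prod_def f)
qed

lemma cuts_filter: "filter_mset (\<lambda>x. fst x = {#}) (cuts t) = {#({#}, t)#}"
proof (induction t)
  case (Node M)
  have "filter_mset (\<lambda>x. fst x = {#}) (cuts (Node M)) =
      image_mset (\<lambda>(p, rs). (p, Node rs)) (filter_mset (\<lambda>x. fst x = {#}) (D M))"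
    by (simp add: cuts_Node filter_mset_image_mset case_prod_beta)
  also have "\<dots> = {#({#}, Node M)#}"
    using D_filter_gen[of M] Node.IH by simp
  finally show ?case .
qed

lemma cuts_ncuts: "cuts t = add_mset ({#}, t) (ncuts t)"
proof -
  have "cuts t = filter_mset (\<lambda>x. fst x = {#}) (cuts t) + filter_mset (\<lambda>x. \<not> fst x = {#}) (cuts t)"
    by (rule multiset_partition)
  also have "filter_mset (\<lambda>x. \<not> fst x = {#}) (cuts t) = ncuts t"
    unfolding ncuts_def by (rule filter_mset_cong) auto
  finally show ?thesis by (simp add: cuts_filter)
qed

lemma D_filter: "filter_mset (\<lambda>x. fst x = {#}) (D F) = {#({#}, F)#}"
  using D_filter_gen cuts_filter by blast



lemma image_mprod_gen:
  assumes "\<And>a b. h (a + b) = ga a + gb b"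
  shows "image_mset h (mprod A B) = mprod (image_mset ga A) (image_mset gb B)"
  unfolding mprod_image unfolding mprod_def image_sum_mset
  by (simp add: multiset.map_comp o_def assms)

lemma bind_dterms: "(\<Sum>x\<in>#dterms t. f x) = f ({#t#}, {#}) + (\<Sum>x\<in>#cuts t. f (fst x, {#snd x#}))"
  by (simp add: dterms_eq multiset.map_comp o_def case_prod_beta)

lemma image_dterms: "image_mset f (dterms t) = add_mset (f ({#t#}, {#})) (image_mset (\<lambda>x. f (fst x, {#snd x#})) (cuts t))"
  by (simp add: dterms_eq multiset.map_comp o_def case_prod_beta)

lemma sum_add_mset_distrib: "(\<Sum>x\<in>#X. add_mset (f x) (g x)) = image_mset f X + (\<Sum>x\<in>#X. g x)"
  by (induction X) auto

definition fL :: "forest \<times> forest \<Rightarrow> (forest \<times> forest \<times> forest) multiset" where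
  "fL x = image_mset (\<lambda>y. (fst y, snd y, snd x)) (D (fst x))"
definition fR :: "forest \<times> forest \<Rightarrow> (forest \<times> forest \<times> forest) multiset" where
  "fR x = image_mset (\<lambda>y. (fst x, fst y, snd y)) (D (snd x))"

definition LL :: "forest \<Rightarrow> (forest \<times> forest \<times> forest) multiset" where
  "LL M = (\<Sum>x\<in>#D M. fL x)"
definition RR :: "forest \<Rightarrow> (forest \<times> forest \<times> forest) multiset" where
  "RR M = (\<Sum>x\<in>#D M. fR x)"

lemma fL_add: "fL (x + x') = mprod (fL x) (fL x')"
  unfolding fL_def
  by (simp add: plus_prod_def D_union image_mprod_gen[where ga="\<lambda>y. (fst y, snd y, snd x)" and gb="\<lambda>y. (fst y, snd y, snd x')"])

lemma fR_add: "fR (x + x') = mprod (fR x) (fR x')"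
  unfolding fR_def
  by (simp add: plus_prod_def D_union image_mprod_gen[where ga="\<lambda>y. (fst x, fst y, snd y)" and gb="\<lambda>y. (fst x', fst y, snd y)"])

lemma LL_union: "LL (M + N) = mprod (LL M) (LL N)"
  unfolding LL_def D_union by (rule bind_mult) (rule fL_add)

lemma RR_union: "RR (M + N) = mprod (RR M) (RR N)"
  unfolding RR_def D_union by (rule bind_mult) (rule fR_add)

lemma LL_empty: "LL {#} = {#0#}"
  by (simp add: LL_def fL_def zero_prod_def)
lemma RR_empty: "RR {#} = {#0#}"
  by (simp add: RR_def fR_def zero_prod_def)

lemma CoF_gen:
  assumes "\<And>t. t \<in># M \<Longrightarrow> LL {#t#} = RR {#t#}"
  shows "LL M = RR M"
  using assms
proof (induction M)
  case empty then show ?case by (simp add: LL_empty RR_empty)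
next
  case (add t M)
  then show ?case
    using LL_union[of "{#t#}" M] RR_union[of "{#t#}" M] by simp
qed

definition C3 :: "tree \<Rightarrow> bool" where
  "C3 t \<longleftrightarrow> (\<Sum>x\<in>#cuts t. image_mset (\<lambda>y. (fst y, snd y, snd x)) (D (fst x))) =
            (\<Sum>x\<in>#cuts t. image_mset (\<lambda>z. (fst x, fst z, snd z)) (cuts (snd x)))"

lemma C3_Node:
  assumes "LL M = RR M"
  shows "C3 (Node M)"
proof -
  let ?h = "\<lambda>w :: forest \<times> forest \<times> forest. (fst w, fst (snd w), Node (snd (snd w)))"
  have "(\<Sum>x\<in>#cuts (Node M). image_mset (\<lambda>y. (fst y, snd y, snd x)) (D (fst x))) = image_mset ?h (LL M)"
    by (simp add: cuts_Node LL_def fL_def image_sum_mset multiset.map_comp o_def case_prod_beta)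
  moreover have "(\<Sum>x\<in>#cuts (Node M). image_mset (\<lambda>z. (fst x, fst z, snd z)) (cuts (snd x))) = image_mset ?h (RR M)"
    by (simp add: cuts_Node RR_def fR_def image_sum_mset multiset.map_comp o_def case_prod_beta)
  ultimately show ?thesis using assms by (simp add: C3_def)
qed

lemma CoT_from_C3:
  assumes "C3 t"
  shows "LL {#t#} = RR {#t#}"
proof -
  let ?h = "\<lambda>w :: forest \<times> forest \<times> tree. (fst w, fst (snd w), {#snd (snd w)#})"
  have eq: "image_mset ?h (\<Sum>x\<in>#cuts t. image_mset (\<lambda>y. (fst y, snd y, snd x)) (D (fst x))) =
            image_mset ?h (\<Sum>x\<in>#cuts t. image_mset (\<lambda>z. (fst x, fst z, snd z)) (cuts (snd x)))"
    using assms by (simp add: C3_def)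
  have "LL {#t#} = add_mset ({#t#}, {#}, {#}) (image_mset (\<lambda>x. (fst x, {#snd x#}, {#})) (cuts t))
      + (\<Sum>x\<in>#cuts t. image_mset (\<lambda>y. (fst y, snd y, {#snd x#})) (D (fst x)))"
    by (simp add: LL_def bind_dterms fL_def image_dterms)
  also have "(\<Sum>x\<in>#cuts t. image_mset (\<lambda>y. (fst y, snd y, {#snd x#})) (D (fst x))) =
       image_mset ?h (\<Sum>x\<in>#cuts t. image_mset (\<lambda>y. (fst y, snd y, snd x)) (D (fst x)))"
    by (simp add: image_sum_mset multiset.map_comp o_def)
  also note eq
  also have "image_mset ?h (\<Sum>x\<in>#cuts t. image_mset (\<lambda>z. (fst x, fst z, snd z)) (cuts (snd x)))
     = (\<Sum>x\<in>#cuts t. image_mset (\<lambda>z. (fst x, fst z, {#snd z#})) (cuts (snd x)))"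
    by (simp add: image_sum_mset multiset.map_comp o_def)
  finally have L: "LL {#t#} = add_mset ({#t#}, {#}, {#}) (image_mset (\<lambda>x. (fst x, {#snd x#}, {#})) (cuts t))
      + (\<Sum>x\<in>#cuts t. image_mset (\<lambda>z. (fst x, fst z, {#snd z#})) (cuts (snd x)))" .
  have R: "RR {#t#} = add_mset ({#t#}, {#}, {#}) (\<Sum>x\<in>#cuts t. add_mset (fst x, {#snd x#}, {#})
      (image_mset (\<lambda>z. (fst x, fst z, {#snd z#})) (cuts (snd x))))"
    by (simp add: RR_def bind_dterms fR_def image_dterms zero_prod_def)
  show ?thesis unfolding L R
    by (simp add: sum_add_mset_distrib)
qed

lemma CoT: "LL {#t#} = RR {#t#}"
proof (induction t)
  case (Node M)
  have "LL M = RR M" by (rule CoF_gen) (use Node.IH in auto)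
  then show ?case by (intro CoT_from_C3 C3_Node)
qed

lemma CoF: "LL M = RR M"
  by (rule CoF_gen) (rule CoT)

lemma C3: "C3 t"
proof (cases t)
  case (Node M) then show ?thesis using C3_Node CoF by simp
qed



lemma fst_graft_aux [simp]: "fst (graft_aux M t) = t"
  by (cases t) simp

lemma graft_Node: "graft M (Node C) = add_mset (Node (C + M)) (image_mset Node (graftF M C))"
proof -
  have "graft M (Node C) = add_mset (Node (C + M)) (\<Sum>c\<in>#C. image_mset (\<lambda>c'. Node (C - {#c#} + {#c'#})) (snd (graft_aux M c)))"
    unfolding graft_def by (simp add: multiset.map_comp o_def case_prod_beta)
  then show ?thesis by (simp add: graftF_def graft_def image_sum_mset multiset.map_comp o_def)
qed

lemma graftF_empty [simp]: "graftF M {#} = {#}"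
  by (simp add: graftF_def)

lemma dterms_eq': "dterms t = add_mset ({#t#}, {#}) (image_mset (\<lambda>w. (fst w, {#snd w#})) (cuts t))"
  by (simp add: dterms_eq case_prod_beta')

lemma cuts_Node': "cuts (Node M) = image_mset (\<lambda>w. (fst w, Node (snd w))) (D M)"
  by (simp add: cuts_Node case_prod_beta')

lemma diff_helper1: assumes "t \<in># N" shows "N + N' - {#t#} + X = N - {#t#} + X + (N'::forest)"
proof -
  obtain N0 where "N = add_mset t N0" using assms by (metis mset_add)
  then show ?thesis by (simp add: add_ac)
qed

lemma diff_helper2: assumes "t \<in># N'" shows "N + N' - {#t#} + X = N + (N' - {#t#} + (X::forest))"
proof -
  obtain N0 where "N' = add_mset t N0" using assms by (metis mset_add)
  then show ?thesis by (simp add: add_ac)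
qed

lemma graftF_union: "graftF M (N + N') = image_mset (\<lambda>F. F + N') (graftF M N) + image_mset (\<lambda>F. N + F) (graftF M N')"
proof -
  have 1: "(\<Sum>t\<in>#N. image_mset (\<lambda>t'. N + N' - {#t#} + {#t'#}) (graft M t)) =
        (\<Sum>t\<in>#N. image_mset (\<lambda>F. F + N') (image_mset (\<lambda>t'. N - {#t#} + {#t'#}) (graft M t)))"
    by (intro arg_cong[where f=sum_mset] image_mset_cong)
       (simp add: multiset.map_comp o_def diff_helper1)
  have 2: "(\<Sum>t\<in>#N'. image_mset (\<lambda>t'. N + N' - {#t#} + {#t'#}) (graft M t)) =
        (\<Sum>t\<in>#N'. image_mset (\<lambda>F. N + F) (image_mset (\<lambda>t'. N' - {#t#} + {#t'#}) (graft M t)))"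
    by (intro arg_cong[where f=sum_mset] image_mset_cong)
       (simp add: multiset.map_comp o_def diff_helper2)
  show ?thesis
    by (simp only: graftF_def image_sum_mset image_mset_union sum_mset.union 1 2)
qed

lemma graftF_single: "graftF M {#t#} = image_mset (\<lambda>t'. {#t'#}) (graft M t)"
  by (simp add: graftF_def)

lemma mprod_single_right: "mprod A {#b#} = image_mset (\<lambda>a. a + b) A"
  by (simp add: mprod_add_mset_right)
lemma mprod_single_left: "mprod {#a#} B = image_mset (\<lambda>b. a + b) B"
  by (simp add: mprod_add_mset_left)

definition gM :: "forest \<Rightarrow> forest \<times> forest \<Rightarrow> (forest \<times> forest) multiset" where
  "gM M x = image_mset (\<lambda>F. (F, snd x)) (graftF M (fst x)) +
     (\<Sum>y\<in>#D M. image_mset (\<lambda>F. (fst x + fst y, F)) (graftF (snd y) (snd x)))"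

definition hM :: "forest \<Rightarrow> forest \<times> tree \<Rightarrow> (forest \<times> tree) multiset" where
  "hM M z = image_mset (\<lambda>F. (F, snd z)) (graftF M (fst z)) +
     (\<Sum>y\<in>#D M. image_mset (\<lambda>t'. (fst z + fst y, t')) (graft (snd y) (snd z)))"

lemma gM_deriv: "gM M (x + x') = mprod (gM M x) {#x'#} + mprod {#x#} (gM M x')"
proof -
  obtain p s where x: "x = (p, s)" by fastforce
  obtain p' s' where x': "x' = (p', s')" by fastforce
  have A: "image_mset (\<lambda>F. (F, s + s')) (graftF M (p + p')) =
     mprod (image_mset (\<lambda>F. (F, s)) (graftF M p)) {#(p', s')#} +
     mprod {#(p, s)#} (image_mset (\<lambda>F. (F, s')) (graftF M p'))"
    by (simp add: graftF_union mprod_single_right mprod_single_left multiset.map_comp o_def plus_prod_def)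
  have B: "(\<Sum>y\<in>#D M. image_mset (\<lambda>F. (p + p' + fst y, F)) (graftF (snd y) (s + s'))) =
     mprod (\<Sum>y\<in>#D M. image_mset (\<lambda>F. (p + fst y, F)) (graftF (snd y) s)) {#(p', s')#} +
     mprod {#(p, s)#} (\<Sum>y\<in>#D M. image_mset (\<lambda>F. (p' + fst y, F)) (graftF (snd y) s'))"
    by (simp add: graftF_union mprod_sum_left mprod_sum_right mprod_single_right mprod_single_left
        multiset.map_comp o_def plus_prod_def sum_mset.distrib add_ac image_sum_mset)
  show ?thesis
    unfolding gM_def x x' plus_prod_def fst_conv snd_conv A B
    by (simp only: mprod_union_left mprod_union_right add_ac)
qed

definition GF :: "forest \<Rightarrow> forest \<Rightarrow> bool" where
  "GF M N \<longleftrightarrow> (\<Sum>F\<in>#graftF M N. D F) = (\<Sum>x\<in>#D N. gM M x)"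

definition GT :: "forest \<Rightarrow> tree \<Rightarrow> bool" where
  "GT M t \<longleftrightarrow> (\<Sum>t'\<in>#graft M t. cuts t') = (\<Sum>z\<in>#cuts t. hM M z)"

lemma GF_empty: "GF M {#}"
  by (simp add: GF_def gM_def zero_prod_def)

lemma GF_union: "GF M N \<Longrightarrow> GF M N' \<Longrightarrow> GF M (N + N')"
proof -
  assume h: "GF M N" "GF M N'"
  have "(\<Sum>F\<in>#graftF M (N + N'). D F) =
      mprod (\<Sum>F\<in>#graftF M N. D F) (D N') + mprod (D N) (\<Sum>F\<in>#graftF M N'. D F)"
    by (simp add: graftF_union multiset.map_comp o_def D_union mprod_sum_left mprod_sum_right)
  also have "\<dots> = mprod (\<Sum>x\<in>#D N. gM M x) (D N') + mprod (D N) (\<Sum>x\<in>#D N'. gM M x)"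
    using h by (simp add: GF_def)
  also have "\<dots> = (\<Sum>x\<in>#D (N + N'). gM M x)"
    unfolding D_union by (rule bind_deriv[symmetric]) (rule gM_deriv)
  finally show ?thesis by (simp add: GF_def)
qed

lemma GF_single: "GT M t \<Longrightarrow> GF M {#t#}"
proof -
  assume h: "GT M t"
  let ?w = "\<lambda>w :: forest \<times> tree. (fst w, {#snd w#})"
  have hg: "image_mset ?w (hM M z) = gM M (fst z, {#snd z#})" for z
    by (simp add: hM_def gM_def graftF_single image_sum_mset multiset.map_comp o_def)
  have "(\<Sum>F\<in>#graftF M {#t#}. D F) = (\<Sum>t'\<in>#graft M t. dterms t')"
    by (simp add: graftF_single multiset.map_comp o_def)
  also have "\<dots> = image_mset (\<lambda>t'. ({#t'#}, {#})) (graft M t) + image_mset ?w (\<Sum>t'\<in>#graft M t. cuts t')"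
    by (simp add: dterms_eq' image_sum_mset sum_add_mset_distrib multiset.map_comp o_def)
  also have "\<dots> = image_mset (\<lambda>t'. ({#t'#}, {#})) (graft M t) + (\<Sum>z\<in>#cuts t. gM M (fst z, {#snd z#}))"
    using h by (simp add: GT_def image_sum_mset hg)
  also have "\<dots> = (\<Sum>x\<in>#D {#t#}. gM M x)"
    by (simp add: bind_dterms gM_def graftF_single multiset.map_comp o_def)
  finally show ?thesis by (simp add: GF_def)
qed

lemma GF_gen: "(\<And>t. t \<in># N \<Longrightarrow> GT M t) \<Longrightarrow> GF M N"
proof (induction N)
  case empty show ?case by (rule GF_empty)
next
  case (add t N)
  then show ?case using GF_union[OF GF_single[of M t], of N] by simp
qed

lemma GT_Node:
  assumes "GF M C"
  shows "GT M (Node C)"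
proof -
  let ?nd = "\<lambda>w :: forest \<times> forest. (fst w, Node (snd w))"
  have nd: "cuts (Node X) = image_mset ?nd (D X)" for X
    by (rule cuts_Node')
  have "(\<Sum>t'\<in>#graft M (Node C). cuts t') = image_mset ?nd (mprod (D C) (D M)) + image_mset ?nd (\<Sum>F\<in>#graftF M C. D F)"
    by (simp add: graft_Node nd D_union image_sum_mset multiset.map_comp o_def)
  also have "\<dots> = image_mset ?nd (mprod (D C) (D M)) + image_mset ?nd (\<Sum>x\<in>#D C. gM M x)"
    using assms by (simp add: GF_def)
  also have "\<dots> = (\<Sum>x\<in>#D C. hM M (fst x, Node (snd x)))"
    by (simp add: mprod_def image_sum_mset multiset.map_comp o_def gM_def hM_def graft_Node
        sum_mset.distrib sum_add_mset_distrib plus_prod_def add_ac)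
  also have "\<dots> = (\<Sum>z\<in>#cuts (Node C). hM M z)"
    by (simp add: nd multiset.map_comp o_def)
  finally show ?thesis by (simp add: GT_def)
qed

lemma GT: "GT M t"
proof (induction t)
  case (Node C)
  show ?case by (rule GT_Node[OF GF_gen[OF Node.IH]])
qed

lemma GF: "GF M N"
  by (rule GF_gen) (rule GT)



lemma msum_image: "msum (image_mset f X) = (\<Sum>x\<in>#X. Poly_Mapping.single (f x) 1)"
  by (simp add: msum_def multiset.map_comp o_def)

lemma one_eq_mono: "(1 :: H) = mono {#}"
  by (simp add: mono_def)

lemma mono_add: "mono (F + G) = mono F * mono G"
  by (simp add: mono_def mult_single)

lemma DeltaT_msum: "DeltaT t = msum (dterms t)"
proof -
  have "msum (dterms t) = Poly_Mapping.single ({#t#}, {#}) 1 + Poly_Mapping.single ({#}, {#t#}) 1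
     + msum (image_mset (\<lambda>w. (fst w, {#snd w#})) (ncuts t))"
    by (simp add: dterms_eq' cuts_ncuts[of t])
  then show ?thesis
    by (simp add: DeltaT_def msum_image case_prod_beta' add_ac)
qed

lemma pair_empty_zero: "({#}, {#}) = (0 :: forest \<times> forest)"
  by (simp add: zero_prod_def)

lemma msum_D: "msum (D F) = prod_mset (image_mset DeltaT F)"
  by (induction F) (simp_all add: D_add_mset msum_mprod DeltaT_msum)

lemma Delta_lext: "Delta x = lext (\<lambda>F. msum (D F)) x"
  unfolding Delta_def by (simp add: msum_D)

lemma Delta_mono: "Delta (mono F) = msum (D F)"
  by (simp add: Delta_lext mono_def)

lemma Delta_of_lext: "Delta (lext f x) = lext (\<lambda>F. Delta (f F)) x"
  unfolding Delta_lext by (rule lext_lext)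

lemma Delta_add: "Delta (x + y) = Delta x + Delta y"
  by (simp add: Delta_lext lext_add)
lemma Delta_diff: "Delta (x - y) = Delta x - Delta y"
  by (simp add: Delta_lext lext_diff)
lemma Delta_sum_mset: "Delta (\<Sum>i\<in>#X. f i) = (\<Sum>i\<in>#X. Delta (f i))"
  by (simp add: Delta_lext lext_sum_mset)
lemma Delta_scal: "Delta (scal c x) = scal c (Delta x)"
  by (simp add: Delta_lext lext_scal)
lemma Delta_msum: "Delta (msum X) = (\<Sum>F\<in>#X. msum (D F))"
  by (simp add: Delta_lext lext_msum)

lemma top_lext: "top x y = lext (\<lambda>M. lext (\<lambda>N. topF M N) y) x"
  by (simp add: top_def lext_def scal_sum)

lemma topF_msum: "topF M N = scal (1 / of_nat (fweight N)) (msum (graftF M N))"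
  by (simp add: topF_def msum_def mono_def[abs_def])

lemma top_mono_left: "top (mono B) q = lext (\<lambda>N. topF B N) q"
  by (simp add: top_lext mono_def)

lemma tens_msum_mono: "tens (msum X) (mono G) = msum (image_mset (\<lambda>F. (F, G)) X)"
  by (induction X) (simp_all add: tens_add_left tens_single mono_def)

lemma tens_mono_msum: "tens (mono G) (msum X) = msum (image_mset (\<lambda>F. (G, F)) X)"
  by (induction X) (simp_all add: tens_add_right tens_single mono_def)

definition Lam :: "forest \<Rightarrow> H2 \<Rightarrow> H2" where
  "Lam M z = lext (\<lambda>w. scal (1 / of_nat (fweight (fst w) + fweight (snd w))) (msum (gM M w))) z"

lemma Lam_add: "Lam M (a + b) = Lam M a + Lam M b"
  by (simp add: Lam_def lext_add)

lemma Lam_D: "Lam M (msum (D N)) = Delta (topF M N)"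
proof -
  have "Lam M (msum (D N)) = (\<Sum>w\<in>#D N. scal (1 / of_nat (fweight N)) (msum (gM M w)))"
    unfolding Lam_def lext_msum
    by (intro arg_cong[where f=sum_mset] image_mset_cong) (simp add: D_weight)
  also have "\<dots> = scal (1 / of_nat (fweight N)) (msum (\<Sum>w\<in>#D N. gM M w))"
    by (simp add: scal_sum_mset msum_sum_mset)
  also have "\<dots> = Delta (topF M N)"
    using GF[of M N] unfolding GF_def by (simp add: topF_msum Delta_scal Delta_msum msum_sum_mset[symmetric])
  finally show ?thesis .
qed

lemma Lam_left: "Lam M (Poly_Mapping.single (N, {#}) 1) = tens (topF M N) 1"
  by (simp add: Lam_def gM_def topF_msum tens_scal_left one_eq_mono tens_msum_mono)

lemma Lam_right: "Lam M (Poly_Mapping.single ({#}, N) 1) = (\<Sum>y\<in>#D M. tens (mono (fst y)) (topF (snd y) N))"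
  by (simp add: Lam_def gM_def topF_msum tens_scal_right tens_mono_msum msum_sum_mset scal_sum_mset)

lemma Lam_tens_left: "Lam M (tens q 1) = lext (\<lambda>N. tens (topF M N) 1) q"
proof -
  have "Lam M (tens q 1) = lext (\<lambda>F. Lam M (Poly_Mapping.single (F, {#}) 1)) q"
    by (simp only: Lam_def lext_tens one_eq_mono mono_def lext_single scal_1)
  then show ?thesis by (simp only: Lam_left)
qed

lemma Lam_tens_right: "Lam M (tens 1 q) = lext (\<lambda>N. \<Sum>y\<in>#D M. tens (mono (fst y)) (topF (snd y) N)) q"
proof -
  have "Lam M (tens 1 q) = lext (\<lambda>G. Lam M (Poly_Mapping.single ({#}, G) 1)) q"
    by (simp only: Lam_def lext_tens one_eq_mono mono_def lext_single scal_1)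
  then show ?thesis by (simp only: Lam_right)
qed

lemma primitive_eps: "primitive q \<Longrightarrow> Poly_Mapping.lookup q {#} = 0"
proof -
  assume "primitive q"
  then have "Poly_Mapping.lookup (Delta q) ({#}, {#}) = Poly_Mapping.lookup (tens q 1 + tens 1 q) ({#}, {#})"
    by (simp add: primitive_def)
  moreover have "Poly_Mapping.lookup (Delta q) ({#}, {#}) = Poly_Mapping.lookup q {#}"
  proof -
    have "Poly_Mapping.lookup (Delta q) ({#}, {#}) = (\<Sum>F\<in>Poly_Mapping.keys q.
        Poly_Mapping.lookup q F * (if F = {#} then 1 else 0))"
      unfolding Delta_lext lookup_lext lookup_msum
    proof (intro sum.cong refl)
      fix F
      have "count (D F) ({#}, {#}) = (if F = {#} then 1 else 0)"
      proof (cases "F = {#}")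
        case True then show ?thesis by (simp add: zero_prod_def)
      next
        case False
        then have "({#}, {#}) \<notin># D F" using D_weight'[of "{#}" "{#}" F] by auto
        then show ?thesis using False by (simp add: count_eq_zero_iff)
      qed
      then show "Poly_Mapping.lookup q F * of_nat (count (D F) ({#}, {#})) =
          Poly_Mapping.lookup q F * (if F = {#} then 1 else 0)" by simp
    qed
    also have "\<dots> = Poly_Mapping.lookup q {#}"
      by (simp add: sum.delta' in_keys_iff if_distrib cong: if_cong)
    finally show ?thesis .
  qed
  ultimately show ?thesis by (simp add: lookup_add lookup_tens lookup_one)
qed

theorem top_formula:
  assumes "primitive q"
  shows "Delta (top x q) = tens (top x q) 1 + lext (\<lambda>w. tens (mono (fst w)) (top (mono (snd w)) q)) (Delta x)"
proof -
  have "Delta (top x q) = lext (\<lambda>M. lext (\<lambda>N. Delta (topF M N)) q) x"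
    by (simp add: top_lext Delta_of_lext)
  also have "\<dots> = lext (\<lambda>M. Lam M (Delta q)) x"
  proof -
    have "Lam M (Delta q) = lext (\<lambda>N. Delta (topF M N)) q" for M
      by (simp only: Delta_lext[of q] Lam_def lext_lext Lam_D[unfolded Lam_def])
    then show ?thesis by simp
  qed
  also have "\<dots> = lext (\<lambda>M. Lam M (tens q 1) + Lam M (tens 1 q)) x"
  proof -
    have dq: "Delta q = tens q 1 + tens 1 q" using assms unfolding primitive_def .
    show ?thesis by (simp only: dq Lam_add)
  qed
  also have "\<dots> = lext (\<lambda>M. lext (\<lambda>N. tens (topF M N) 1) q + lext (\<lambda>N. \<Sum>y\<in>#D M. tens (mono (fst y)) (topF (snd y) N)) q) x"
    by (simp only: Lam_tens_left Lam_tens_right)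
  also have "\<dots> = tens (top x q) 1 + lext (\<lambda>w. tens (mono (fst w)) (top (mono (snd w)) q)) (Delta x)"
    by (simp add: lext_plus_fun top_lext tens_lext_left Delta_lext lext_lext lext_msum lext_sum_mset_fun
        tens_lext_right top_mono_left[unfolded top_lext])
  finally show ?thesis .
qed



lemma phiT_eq:
  "phiT P T = (\<Sum>w\<in>#ncuts T. top (prod_mset (image_mset (phiT P) (fst w))) (P (snd w))) + P T"
proof -
  have "phiT P T = (\<Sum>w\<in>#ncuts T. (case w of (p, r) \<Rightarrow> top (prod_mset (image_mset (cut (phiT P) (measure weight) T) p)) (P r))) + P T"
    unfolding phiT_def by (subst wfrec) simp_all
  also have "(\<Sum>w\<in>#ncuts T. (case w of (p, r) \<Rightarrow> top (prod_mset (image_mset (cut (phiT P) (measure weight) T) p)) (P r)))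
     = (\<Sum>w\<in>#ncuts T. top (prod_mset (image_mset (phiT P) (fst w))) (P (snd w)))"
  proof (intro arg_cong[where f=sum_mset] image_mset_cong)
    fix w assume w: "w \<in># ncuts T"
    obtain p r where wpr: "w = (p, r)" by fastforce
    have "image_mset (cut (phiT P) (measure weight) T) p = image_mset (phiT P) p"
      using ncuts_weight(2)[of p r T] w wpr by (intro image_mset_cong) (simp add: cut_apply)
    then show "(case w of (p, r) \<Rightarrow> top (prod_mset (image_mset (cut (phiT P) (measure weight) T) p)) (P r)) =
        top (prod_mset (image_mset (phiT P) (fst w))) (P (snd w))" by (simp add: wpr)
  qed
  finally show ?thesis .
qed

definition Pdef :: "(H \<Rightarrow> H) \<Rightarrow> tree \<Rightarrow> H" where
  "Pdef \<Psi> = wfrec (measure weight) (\<lambda>rec T. \<Psi> (treeH T) - (\<Sum>w\<in>#ncuts T. top (\<Psi> (mono (fst w))) (rec (snd w))))"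

lemma Pdef_eq:
  "Pdef \<Psi> T = \<Psi> (treeH T) - (\<Sum>w\<in>#ncuts T. top (\<Psi> (mono (fst w))) (Pdef \<Psi> (snd w)))"
proof -
  have "Pdef \<Psi> T = \<Psi> (treeH T) - (\<Sum>w\<in>#ncuts T. top (\<Psi> (mono (fst w))) (cut (Pdef \<Psi>) (measure weight) T (snd w)))"
    unfolding Pdef_def by (subst wfrec) simp_all
  also have "(\<Sum>w\<in>#ncuts T. top (\<Psi> (mono (fst w))) (cut (Pdef \<Psi>) (measure weight) T (snd w))) =
      (\<Sum>w\<in>#ncuts T. top (\<Psi> (mono (fst w))) (Pdef \<Psi> (snd w)))"
  proof (intro arg_cong[where f=sum_mset] image_mset_cong)
    fix w assume w: "w \<in># ncuts T"
    obtain p r where wpr: "w = (p, r)" by fastforce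
    show "top (\<Psi> (mono (fst w))) (cut (Pdef \<Psi>) (measure weight) T (snd w)) = top (\<Psi> (mono (fst w))) (Pdef \<Psi> (snd w))"
      using ncuts_weight(1)[of p r T] w wpr by (simp add: cut_apply)
  qed
  finally show ?thesis .
qed

lemma Phi_treeH: "Phi P (treeH T) = phiT P T"
  by (simp add: Phi_def treeH_def mono_def)

section \<open>Facts about bialgebra endomorphisms\<close>

lemma bialg_linear: "bialg_endo \<Psi> \<Longrightarrow> linear_map \<Psi>"
  by (simp add: bialg_endo_def linear_map_def)

lemma bialg_mono: "bialg_endo \<Psi> \<Longrightarrow> \<Psi> (mono F) = prod_mset (image_mset (\<lambda>t. \<Psi> (treeH t)) F)"
proof (induction F)
  case empty then show ?case by (simp add: bialg_endo_def one_eq_mono[symmetric])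
next
  case (add t F)
  have "mono (add_mset t F) = treeH t * mono F"
    by (simp add: treeH_def mono_add[symmetric])
  then show ?case using add by (simp add: bialg_endo_def)
qed

lemma bialg_one: "bialg_endo \<Psi> \<Longrightarrow> \<Psi> (mono {#}) = 1"
  by (simp add: bialg_endo_def one_eq_mono[symmetric])

lemma bialg_single: "bialg_endo \<Psi> \<Longrightarrow> \<Psi> (mono {#t#}) = \<Psi> (treeH t)"
  by (simp add: treeH_def)

lemma tmap_msum: "tmap f g (msum X) = (\<Sum>w\<in>#X. tens (f (mono (fst w))) (g (mono (snd w))))"
  by (simp add: tmap_def lext_msum case_prod_beta')

lemma Delta_Psi_mono:
  assumes "bialg_endo \<Psi>"
  shows "Delta (\<Psi> (mono F)) = (\<Sum>w\<in>#D F. tens (\<Psi> (mono (fst w))) (\<Psi> (mono (snd w))))"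
  using assms by (simp add: bialg_endo_def Delta_mono tmap_msum)

lemma bialg_eps: "bialg_endo \<Psi> \<Longrightarrow> Poly_Mapping.lookup (\<Psi> x) {#} = Poly_Mapping.lookup x {#}"
  by (simp add: bialg_endo_def eps_def)

section \<open>top with empty forest\<close>

lemma msum_replicate: "msum (replicate_mset n x) = Poly_Mapping.single x (of_nat n)"
  by (induction n) (simp_all add: single_add[symmetric] add.commute)

lemma replicate_plus: "replicate_mset (m + n) x = replicate_mset m x + replicate_mset n x"
  by (induction m) auto

lemma sum_replicate: "(\<Sum>t\<in>#X. replicate_mset (weight t) Y) = replicate_mset (fweight X) Y"
  by (induction X) (simp_all add: replicate_plus)

lemma graft_empty: "graft {#} t = replicate_mset (weight t) t"
proof (induction t)
  case (Node C)
  have "graftF {#} C = replicate_mset (fweight C) C"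
  proof -
    have "graftF {#} C = (\<Sum>t\<in>#C. replicate_mset (weight t) C)"
      unfolding graftF_def
    proof (intro arg_cong[where f=sum_mset] image_mset_cong)
      fix t assume t: "t \<in># C"
      then show "image_mset (\<lambda>t'. C - {#t#} + {#t'#}) (graft {#} t) = replicate_mset (weight t) C"
        using Node.IH[of t] by simp
    qed
    also have "\<dots> = replicate_mset (fweight C) C"
      by (rule sum_replicate)
    finally show ?thesis .
  qed
  then show ?case by (simp add: graft_Node weight_Node del: weight.simps)
qed

lemma graftF_empty_left: "graftF {#} N = replicate_mset (fweight N) N"
proof -
  have "graftF {#} N = (\<Sum>t\<in>#N. replicate_mset (weight t) N)"
    unfolding graftF_def
  proof (intro arg_cong[where f=sum_mset] image_mset_cong)
    fix t assume t: "t \<in># N"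
    then show "image_mset (\<lambda>t'. N - {#t#} + {#t'#}) (graft {#} t) = replicate_mset (weight t) N"
      by (simp add: graft_empty)
  qed
  also have "\<dots> = replicate_mset (fweight N) N"
    by (rule sum_replicate)
  finally show ?thesis .
qed

lemma topF_empty_left: "N \<noteq> {#} \<Longrightarrow> topF {#} N = Poly_Mapping.single N 1"
  by (simp add: topF_msum graftF_empty_left msum_replicate)

lemma top_one: "Poly_Mapping.lookup y {#} = 0 \<Longrightarrow> top 1 y = y"
proof -
  assume y: "Poly_Mapping.lookup y {#} = 0"
  have "top 1 y = lext (\<lambda>N. topF {#} N) y"
    by (simp add: one_eq_mono top_mono_left)
  also have "\<dots> = lext (\<lambda>N. Poly_Mapping.single N 1) y"
  proof (intro lext_cong)
    fix F assume "F \<in> Poly_Mapping.keys y"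
    then have "F \<noteq> {#}" using y by (auto simp: in_keys_iff)
    then show "topF {#} F = Poly_Mapping.single F 1" by (rule topF_empty_left)
  qed
  also have "\<dots> = y" by (rule lext_expand)
  finally show ?thesis .
qed

lemma graftF_nonempty: "F \<in># graftF M N \<Longrightarrow> F \<noteq> {#}"
  by (auto simp: graftF_def)

lemma lookup_top_empty: "Poly_Mapping.lookup (top x y) {#} = 0"
proof -
  have "Poly_Mapping.lookup (topF M N) {#} = 0" for M N
  proof -
    have "{#} \<notin># graftF M N" using graftF_nonempty by blast
    then show ?thesis by (simp add: topF_msum lookup_msum count_eq_zero_iff)
  qed
  then show ?thesis by (simp add: top_lext lookup_lext)
qed

lemma lookup_sum_mset: "Poly_Mapping.lookup (\<Sum>i\<in>#X. f i) k = (\<Sum>i\<in>#X. Poly_Mapping.lookup (f i) k)"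
  by (induction X) (simp_all add: lookup_add)

lemma Pdef_eps:
  assumes "bialg_endo \<Psi>"
  shows "Poly_Mapping.lookup (Pdef \<Psi> T) {#} = 0"
proof -
  have "Poly_Mapping.lookup (\<Psi> (treeH T)) {#} = 0"
    using assms by (simp add: bialg_eps treeH_def mono_def lookup_single)
  then show ?thesis
    by (subst Pdef_eq) (simp add: lookup_minus lookup_sum_mset lookup_top_empty)
qed

lemma Psi_tree_cuts:
  assumes "bialg_endo \<Psi>"
  shows "\<Psi> (treeH r) = (\<Sum>z\<in>#cuts r. top (\<Psi> (mono (fst z))) (Pdef \<Psi> (snd z)))"
proof -
  have "top (\<Psi> (mono {#})) (Pdef \<Psi> r) = Pdef \<Psi> r"
    using assms by (simp add: bialg_one top_one Pdef_eps)
  then show ?thesis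
    by (simp add: cuts_ncuts[of r] Pdef_eq[of \<Psi> r])
qed


lemma top_lin_left: "lext (\<lambda>G. top (mono G) q) b = top b q"
  unfolding top_mono_left unfolding top_lext by (rule refl)

lemma Theta_tens: "lext (\<lambda>v. tens (mono (fst v)) (top (mono (snd v)) q)) (tens a b) = tens a (top b q)"
proof -
  have "lext (\<lambda>v. tens (mono (fst v)) (top (mono (snd v)) q)) (tens a b) =
      lext (\<lambda>F. lext (\<lambda>G. tens (mono F) (top (mono G) q)) b) a"
    by (simp add: lext_tens)
  also have "\<dots> = lext (\<lambda>F. tens (mono F) (top b q)) a"
    by (simp only: tens_lext_right[symmetric] top_lin_left)
  also have "\<dots> = tens a (top b q)"
    by (simp only: tens_lext_left[symmetric]) (simp add: mono_def[abs_def] lext_expand)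
  finally show ?thesis .
qed

lemma Delta_top_Psi:
  assumes "bialg_endo \<Psi>" "primitive q"
  shows "Delta (top (\<Psi> (mono p)) q) = tens (top (\<Psi> (mono p)) q) 1 +
     (\<Sum>y\<in>#D p. tens (\<Psi> (mono (fst y))) (top (\<Psi> (mono (snd y))) q))"
  using top_formula[OF assms(2), of "\<Psi> (mono p)"]
  by (simp add: Delta_Psi_mono[OF assms(1)] lext_sum_mset Theta_tens)

lemma Pdef_primitive:
  assumes bi: "bialg_endo \<Psi>"
  shows "primitive (Pdef \<Psi> T)"
proof (induction T rule: measure_induct_rule[of weight])
  case (less T)
  define P where "P = Pdef \<Psi>"
  define S where "S = (\<Sum>w\<in>#ncuts T. top (\<Psi> (mono (fst w))) (P (snd w)))"
  define \<phi> where "\<phi> = (\<lambda>u :: forest \<times> forest \<times> tree. tens (\<Psi> (mono (fst u))) (top (\<Psi> (mono (fst (snd u)))) (P (snd (snd u)))))"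
  define XX where "XX = (\<Sum>x\<in>#ncuts T. \<Sum>y\<in>#D (fst x). tens (\<Psi> (mono (fst y))) (top (\<Psi> (mono (snd y))) (P (snd x))))"
  define YY where "YY = (\<Sum>x\<in>#cuts T. tens (\<Psi> (mono (fst x))) (\<Psi> (treeH (snd x))))"
  have PT: "P T = \<Psi> (treeH T) - S"
    unfolding P_def S_def by (rule Pdef_eq)
  have dPsi: "Delta (\<Psi> (treeH T)) = tens (\<Psi> (treeH T)) 1 + YY"
  proof -
    have "Delta (\<Psi> (treeH T)) = (\<Sum>w\<in>#dterms T. tens (\<Psi> (mono (fst w))) (\<Psi> (mono (snd w))))"
      using Delta_Psi_mono[OF bi, of "{#T#}"] by (simp add: treeH_def)
    also have "\<dots> = tens (\<Psi> (mono {#T#})) (\<Psi> (mono {#})) +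
        (\<Sum>x\<in>#cuts T. tens (\<Psi> (mono (fst x))) (\<Psi> (mono {#snd x#})))"
      by (simp only: bind_dterms fst_conv snd_conv)
    also have "\<dots> = tens (\<Psi> (treeH T)) 1 + YY"
      by (simp add: YY_def bialg_one[OF bi] treeH_def)
    finally show ?thesis .
  qed
  have dS: "Delta S = tens S 1 + XX"
  proof -
    have "Delta S = (\<Sum>x\<in>#ncuts T. tens (top (\<Psi> (mono (fst x))) (P (snd x))) 1 +
        (\<Sum>y\<in>#D (fst x). tens (\<Psi> (mono (fst y))) (top (\<Psi> (mono (snd y))) (P (snd x)))))"
      unfolding S_def Delta_sum_mset
    proof (intro arg_cong[where f=sum_mset] image_mset_cong)
      fix x assume x: "x \<in># ncuts T"
      have "weight (snd x) < weight T" using ncuts_weight(1)[of "fst x" "snd x" T] x by simp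
      then have "primitive (P (snd x))" using less P_def by simp
      then show "Delta (top (\<Psi> (mono (fst x))) (P (snd x))) = tens (top (\<Psi> (mono (fst x))) (P (snd x))) 1 +
        (\<Sum>y\<in>#D (fst x). tens (\<Psi> (mono (fst y))) (top (\<Psi> (mono (snd y))) (P (snd x))))"
        by (rule Delta_top_Psi[OF bi])
    qed
    also have "\<dots> = tens S 1 + XX"
      by (simp add: sum_mset.distrib S_def XX_def tens_sum_mset_left)
    finally show ?thesis .
  qed
  have XY: "tens 1 (P T) + XX = YY"
  proof -
    have c3: "(\<Sum>x\<in>#cuts T. image_mset (\<lambda>y. (fst y, snd y, snd x)) (D (fst x))) =
            (\<Sum>x\<in>#cuts T. image_mset (\<lambda>z. (fst x, fst z, snd z)) (cuts (snd x)))"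
      using C3[of T] by (simp add: C3_def)
    have L: "(\<Sum>u\<in>#(\<Sum>x\<in>#cuts T. image_mset (\<lambda>y. (fst y, snd y, snd x)) (D (fst x))). \<phi> u) = tens 1 (P T) + XX"
    proof -
      have "top 1 (P T) = P T" using Pdef_eps[OF bi] P_def by (simp add: top_one)
      then show ?thesis
        by (simp add: sum_mset_bind multiset.map_comp o_def cuts_ncuts[of T] \<phi>_def XX_def bialg_one[OF bi])
    qed
    have R: "(\<Sum>u\<in>#(\<Sum>x\<in>#cuts T. image_mset (\<lambda>z. (fst x, fst z, snd z)) (cuts (snd x))). \<phi> u) = YY"
    proof -
      have "(\<Sum>u\<in>#(\<Sum>x\<in>#cuts T. image_mset (\<lambda>z. (fst x, fst z, snd z)) (cuts (snd x))). \<phi> u) =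
          (\<Sum>x\<in>#cuts T. tens (\<Psi> (mono (fst x))) (\<Sum>z\<in>#cuts (snd x). top (\<Psi> (mono (fst z))) (P (snd z))))"
        by (simp add: sum_mset_bind multiset.map_comp o_def \<phi>_def tens_sum_mset_right)
      also have "\<dots> = YY"
        by (simp add: YY_def P_def Psi_tree_cuts[OF bi])
      finally show ?thesis .
    qed
    show ?thesis using L R c3 by simp
  qed
  have "Delta (P T) = tens (P T) 1 + tens 1 (P T)"
  proof -
    have "Delta (P T) = Delta (\<Psi> (treeH T)) - Delta S" by (simp add: PT Delta_diff)
    also have "\<dots> = tens (\<Psi> (treeH T)) 1 + YY - (tens S 1 + XX)" by (simp add: dPsi dS)
    also have "\<dots> = tens (\<Psi> (treeH T) - S) 1 + tens 1 (P T)"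
      by (simp add: XY[symmetric] tens_diff_left algebra_simps)
    finally show ?thesis by (simp add: PT)
  qed
  then show ?case by (simp add: primitive_def P_def)
qed

lemma phiT_Pdef:
  assumes bi: "bialg_endo \<Psi>"
  shows "phiT (Pdef \<Psi>) T = \<Psi> (treeH T)"
proof (induction T rule: measure_induct_rule[of weight])
  case (less T)
  have "(\<Sum>w\<in>#ncuts T. top (prod_mset (image_mset (phiT (Pdef \<Psi>)) (fst w))) (Pdef \<Psi> (snd w))) =
        (\<Sum>w\<in>#ncuts T. top (\<Psi> (mono (fst w))) (Pdef \<Psi> (snd w)))"
  proof (intro arg_cong[where f=sum_mset] image_mset_cong)
    fix w assume w: "w \<in># ncuts T"
    have "image_mset (phiT (Pdef \<Psi>)) (fst w) = image_mset (\<lambda>t. \<Psi> (treeH t)) (fst w)"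
    proof (intro image_mset_cong)
      fix s assume "s \<in># fst w"
      then have "weight s < weight T" using ncuts_weight(2)[of "fst w" "snd w" T] w by simp
      then show "phiT (Pdef \<Psi>) s = \<Psi> (treeH s)" by (rule less)
    qed
    then show "top (prod_mset (image_mset (phiT (Pdef \<Psi>)) (fst w))) (Pdef \<Psi> (snd w)) =
        top (\<Psi> (mono (fst w))) (Pdef \<Psi> (snd w))" by (simp add: bialg_mono[OF bi])
  qed
  then show ?case by (simp add: phiT_eq[of _ T] Pdef_eq[of \<Psi> T])
qed

lemma Phi_Pdef:
  assumes bi: "bialg_endo \<Psi>"
  shows "Phi (Pdef \<Psi>) = \<Psi>"
proof
  fix x
  have "Phi (Pdef \<Psi>) x = lext (\<lambda>F. \<Psi> (mono F)) x"
  proof -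
    have "phiT (Pdef \<Psi>) = (\<lambda>t. \<Psi> (treeH t))" by (rule ext) (rule phiT_Pdef[OF bi])
    then show ?thesis unfolding Phi_def by (simp add: bialg_mono[OF bi])
  qed
  also have "\<dots> = \<Psi> x"
    using linear_map_is_lext[OF bialg_linear[OF bi], of x] by (simp add: mono_def[abs_def])
  finally show "Phi (Pdef \<Psi>) x = \<Psi> x" .
qed

lemma Pdef_unique:
  assumes bi: "bialg_endo \<Psi>" and eq: "\<Psi> = Phi Q"
  shows "Q T = Pdef \<Psi> T"
proof -
  have ph: "phiT Q t = \<Psi> (treeH t)" for t
    using eq by (simp add: Phi_treeH)
  have phf: "phiT Q = (\<lambda>t. \<Psi> (treeH t))" using ph by (rule ext)
  show ?thesis
  proof (induction T rule: measure_induct_rule[of weight])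
    case (less T)
    have "(\<Sum>w\<in>#ncuts T. top (prod_mset (image_mset (phiT Q) (fst w))) (Q (snd w))) =
          (\<Sum>w\<in>#ncuts T. top (\<Psi> (mono (fst w))) (Pdef \<Psi> (snd w)))"
    proof (intro arg_cong[where f=sum_mset] image_mset_cong)
      fix w assume w: "w \<in># ncuts T"
      have "weight (snd w) < weight T" using ncuts_weight(1)[of "fst w" "snd w" T] w by simp
      then have "Q (snd w) = Pdef \<Psi> (snd w)" by (rule less)
      then show "top (prod_mset (image_mset (phiT Q) (fst w))) (Q (snd w)) =
          top (\<Psi> (mono (fst w))) (Pdef \<Psi> (snd w))" by (simp add: bialg_mono[OF bi] phf)
    qed
    note sumeq = this
    have A: "\<Psi> (treeH T) = (\<Sum>w\<in>#ncuts T. top (\<Psi> (mono (fst w))) (Pdef \<Psi> (snd w))) + Q T"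
    proof -
      have "phiT Q T = (\<Sum>w\<in>#ncuts T. top (prod_mset (image_mset (phiT Q) (fst w))) (Q (snd w))) + Q T"
        by (rule phiT_eq)
      then show ?thesis by (simp only: ph sumeq)
    qed
    then have "Q T = \<Psi> (treeH T) - (\<Sum>w\<in>#ncuts T. top (\<Psi> (mono (fst w))) (Pdef \<Psi> (snd w)))"
      by (simp add: algebra_simps)
    then show ?case by (simp only: Pdef_eq[of \<Psi> T])
  qed
qed

theorem theorem10p2:
  fixes \<Psi> :: "H \<Rightarrow> H"
  assumes "bialg_endo \<Psi>"
  shows "\<exists>!P :: tree \<Rightarrow> H. (\<forall>t. primitive (P t)) \<and> \<Psi> = Phi P"
proof (rule ex1I[of _ "Pdef \<Psi>"])
  show "(\<forall>t. primitive (Pdef \<Psi> t)) \<and> \<Psi> = Phi (Pdef \<Psi>)"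
    using Pdef_primitive[OF assms] Phi_Pdef[OF assms] by simp
next
  fix Q assume "(\<forall>t. primitive (Q t)) \<and> \<Psi> = Phi Q"
  then show "Q = Pdef \<Psi>"
    using Pdef_unique[OF assms] by blast
qed


end
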